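(* Let $b$ satisfy (b1)–(b4), $u\in BV(\Omega)\cap L^\infty(\Omega)$, $\lambda\colon\Omega\to[0,1]$ Borel, and let $(u_n)\subset C^\infty(\Omega)\cap BV(\Omega)$ satisfy: $u_n\to u$ strictly in $BV(\Omega)$; $u_n(x)\to u^\lambda(x)$ for $\mathcal H^{N-1}$-a.e. $x\in\Omega$; $\|u_n\|_{L^\infty}\le(1+1/n)\|u\|_{L^\infty}$. Then for every Borel $\Lambda\colon\Omega\to[0,1]$ and every $\varphi\in C^1_c(\Omega)$, $$\lim_{n\to\infty}\int_\Omega\varphi\,d(b(\cdot,u_n),Du_n)_\Lambda=\int_\Omega\varphi\,d(b(\cdot,u),Du)_\lambda .$$
   Context: $\Omega\subseteq\mathbb R^N$ ($N\ge2$) open; $\mathcal{DM}^\infty(\Omega)$ = fields $A\in L^\infty(\Omega;\mathbb R^N)$ with distributional divergence a finite Radon measure. Assumptions on $b\colon\Omega\times\mathbb R\to\mathbb R^N$: (b1) Borel and bounded; (b2) for a.e. $x$, $t\mapsto b(x,t)$ continuous; (b3) $b_t:=b(\cdot,t)\in\mathcal{DM}^\infty(\Omega)$ for all $t$; (b4) $\sigma:=\bigvee_t|\operatorname{div}_xb_t|$ (least upper bound of measures) is a finite Radon measure; $\sigma$ vanishes on $\mathcal H^{N-1}$-null sets. $f(\cdot,t)=d\operatorname{div}_xb_t/d\sigma$, $B(x,t)=\int_0^tb(x,s)ds$, $F(x,t)=\int_0^tf(x,s)ds$. $u^\pm$ approximate upper/lower limits, $u^\lambda=(1-\lambda)u^-+\lambda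 u^+$. $(b(\cdot,u),Du)_\lambda:=-F(x,u^\lambda)\sigma+\operatorname{div}(B(x,u(x)))$. Strict convergence: $u_n\to u$ in $L^1$ and $|Du_n|(\Omega)\to|Du|(\Omega)$. *)

theory Defs
  imports "HOL-Analysis.Analysis" "HOL-Probability.Essential_Supremum"
begin

definition pderiv :: "('a::euclidean_space \<Rightarrow> real) \<Rightarrow> 'a \<Rightarrow> 'a \<Rightarrow> real" where
  "pderiv f i x = frechet_derivative f (at x) i"

definition grad :: "('a::euclidean_space \<Rightarrow> real) \<Rightarrow> 'a \<Rightarrow> 'a" where
  "grad f x = (\<Sum>i\<in>Basis. pderiv f i x *\<^sub>R i)"

definition divg :: "('a::euclidean_space \<Rightarrow> 'a) \<Rightarrow> 'a \<Rightarrow> real" where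
  "divg F x = (\<Sum>i\<in>Basis. pderiv (\<lambda>y. F y \<bullet> i) i x)"

fun Ck :: "nat \<Rightarrow> 'a::euclidean_space set \<Rightarrow> ('a \<Rightarrow> real) \<Rightarrow> bool" where
  "Ck 0 S f = continuous_on S f"
| "Ck (Suc k) S f = ((\<forall>x\<in>S. f differentiable (at x)) \<and> (\<forall>i\<in>Basis. Ck k S (pderiv f i)))"

definition Cinf :: "'a::euclidean_space set \<Rightarrow> ('a \<Rightarrow> real) \<Rightarrow> bool" where
  "Cinf S f = (\<forall>k. Ck k S f)"

definition C1c :: "'a::euclidean_space set \<Rightarrow> ('a \<Rightarrow> real) \<Rightarrow> bool" where
  "C1c \<Omega> \<phi> = (Ck 1 UNIV \<phi> \<and> compact (closure {x. \<phi> x \<noteq> 0}) \<and> closure {x. \<phi> x \<noteq> 0} \<subseteq> \<Omega>)"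

definition C1c_field :: "'a::euclidean_space set \<Rightarrow> ('a \<Rightarrow> 'a) \<Rightarrow> bool" where
  "C1c_field \<Omega> \<phi> = (\<forall>i\<in>Basis. C1c \<Omega> (\<lambda>x. \<phi> x \<bullet> i))"

definition TV :: "'a::euclidean_space set \<Rightarrow> ('a \<Rightarrow> real) \<Rightarrow> ereal" where
  "TV \<Omega> u = (SUP \<phi>\<in>{\<phi>. C1c_field \<Omega> \<phi> \<and> (\<forall>x. norm (\<phi> x) \<le> 1)}.
              ereal (\<integral>x. u x * divg \<phi> x \<partial>(lebesgue_on \<Omega>)))"

definition BV :: "'a::euclidean_space set \<Rightarrow> ('a \<Rightarrow> real) \<Rightarrow> bool" where
  "BV \<Omega> u = (integrable (lebesgue_on \<Omega>) u \<and> TV \<Omega> u < \<infinity>)"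

definition Linf_norm :: "'a::euclidean_space set \<Rightarrow> ('a \<Rightarrow> real) \<Rightarrow> ereal" where
  "Linf_norm \<Omega> u = esssup (lebesgue_on \<Omega>) (\<lambda>x. ereal \<bar>u x\<bar>)"

definition Linf :: "'a::euclidean_space set \<Rightarrow> ('a \<Rightarrow> real) \<Rightarrow> bool" where
  "Linf \<Omega> u = (u \<in> borel_measurable (lebesgue_on \<Omega>) \<and> Linf_norm \<Omega> u < \<infinity>)"

definition strictly_conv :: "'a::euclidean_space set \<Rightarrow> (nat \<Rightarrow> 'a \<Rightarrow> real) \<Rightarrow> ('a \<Rightarrow> real) \<Rightarrow> bool" where
  "strictly_conv \<Omega> v u =
     ((\<lambda>n. \<integral>x. \<bar>v n x - u x\<bar> \<partial>(lebesgue_on \<Omega>)) \<longlonglongrightarrow> 0 \<and>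
      (\<lambda>n. TV \<Omega> (v n)) \<longlonglongrightarrow> TV \<Omega> u)"

definition density_zero :: "'a::euclidean_space set \<Rightarrow> 'a \<Rightarrow> bool" where
  "density_zero E x =
     ((\<lambda>r::real. measure lebesgue (E \<inter> ball x r) / measure lebesgue (ball x r)) \<longlongrightarrow> 0) (at_right 0)"

definition apx_upper :: "'a::euclidean_space set \<Rightarrow> ('a \<Rightarrow> real) \<Rightarrow> 'a \<Rightarrow> ereal" where
  "apx_upper \<Omega> u x = Inf (ereal ` {t. density_zero {y\<in>\<Omega>. u y > t} x})"

definition apx_lower :: "'a::euclidean_space set \<Rightarrow> ('a \<Rightarrow> real) \<Rightarrow> 'a \<Rightarrow> ereal" where
  "apx_lower \<Omega> u x = Sup (ereal ` {t. density_zero {y\<in>\<Omega>. u y < t} x})"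

text \<open>u^\<lambda> = (1-\<lambda>) u^- + \<lambda> u^+ (finite everywhere for u \<in> L^\<infinity>).\<close>
definition u_lam :: "'a::euclidean_space set \<Rightarrow> ('a \<Rightarrow> real) \<Rightarrow> ('a \<Rightarrow> real) \<Rightarrow> 'a \<Rightarrow> real" where
  "u_lam \<Omega> u lam x = (1 - lam x) * real_of_ereal (apx_lower \<Omega> u x) + lam x * real_of_ereal (apx_upper \<Omega> u x)"

definition omega_s :: "real \<Rightarrow> real" where
  "omega_s s = pi powr (s / 2) / Gamma (s / 2 + 1)"

definition hausdorff_pre :: "real \<Rightarrow> real \<Rightarrow> 'a::euclidean_space set \<Rightarrow> ennreal" where
  "hausdorff_pre s \<delta> E = (INF C\<in>{C :: nat \<Rightarrow> 'a set. E \<subseteq> (\<Union>i. C i) \<and>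
        (\<forall>i. bounded (C i) \<and> diameter (C i) \<le> \<delta>)}.
        (\<Sum>i. ennreal (omega_s s * (diameter (C i) / 2) powr s)))"

definition hausdorff :: "real \<Rightarrow> 'a::euclidean_space set \<Rightarrow> ennreal" where
  "hausdorff s E = (SUP \<delta>\<in>{0<..}. hausdorff_pre s \<delta> E)"

definition finite_borel_on :: "'a::euclidean_space set \<Rightarrow> 'a measure \<Rightarrow> bool" where
  "finite_borel_on \<Omega> \<mu> = (sets \<mu> = sets (restrict_space borel \<Omega>) \<and> emeasure \<mu> \<Omega> < \<infinity>)"

text \<open>div A = \<mu>p - \<mu>m in the sense of distributions, with (\<mu>p, \<mu>m) the Jordan
  decomposition (finite, mutually singular Borel measures on \<Omega>);
  hence |div A| = \<mu>p + \<mu>m.\<close>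
definition div_measure :: "'a::euclidean_space set \<Rightarrow> ('a \<Rightarrow> 'a) \<Rightarrow> 'a measure \<Rightarrow> 'a measure \<Rightarrow> bool" where
  "div_measure \<Omega> A \<mu>p \<mu>m =
     (finite_borel_on \<Omega> \<mu>p \<and> finite_borel_on \<Omega> \<mu>m \<and>
      (\<exists>P\<in>sets \<mu>p. emeasure \<mu>p (\<Omega> - P) = 0 \<and> emeasure \<mu>m P = 0) \<and>
      (\<forall>\<phi>. C1c \<Omega> \<phi> \<longrightarrow>
         (\<integral>x. A x \<bullet> grad \<phi> x \<partial>(lebesgue_on \<Omega>)) = - ((\<integral>x. \<phi> x \<partial>\<mu>p) - (\<integral>x. \<phi> x \<partial>\<mu>m))))"

definition is_measure_lub :: "'a::euclidean_space set \<Rightarrow> (real \<Rightarrow> 'a set \<Rightarrow> ennreal) \<Rightarrow> 'a measure \<Rightarrow> bool" where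
  "is_measure_lub \<Omega> \<nu> \<sigma> =
     (sets \<sigma> = sets (restrict_space borel \<Omega>) \<and>
      (\<forall>t. \<forall>E\<in>sets \<sigma>. \<nu> t E \<le> emeasure \<sigma> E) \<and>
      (\<forall>\<rho>. sets \<rho> = sets \<sigma> \<longrightarrow> (\<forall>t. \<forall>E\<in>sets \<sigma>. \<nu> t E \<le> emeasure \<rho> E) \<longrightarrow>
           (\<forall>E\<in>sets \<sigma>. emeasure \<sigma> E \<le> emeasure \<rho> E)))"

definition Bint :: "('a \<Rightarrow> real \<Rightarrow> 'a::euclidean_space) \<Rightarrow> 'a \<Rightarrow> real \<Rightarrow> 'a" where
  "Bint b x t = interval_lebesgue_integral lborel (ereal 0) (ereal t) (\<lambda>s. b x s)"

definition Fint :: "('a \<Rightarrow> real \<Rightarrow> real) \<Rightarrow> 'a \<Rightarrow> real \<Rightarrow> real" where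
  "Fint f x t = interval_lebesgue_integral lborel (ereal 0) (ereal t) (\<lambda>s. f x s)"

text \<open>\<integral>\<phi> d(b(\<cdot>,u),Du)_\<lambda> = -\<integral> \<phi>(x) F(x,u^\<lambda>(x)) d\<sigma> + \<langle>div B(\<cdot>,u(\<cdot>)), \<phi>\<rangle>,
  where the distributional divergence acts by \<langle>div V, \<phi>\<rangle> = -\<integral> V\<cdot>\<nabla>\<phi> dx.\<close>
definition pairing_int ::
  "'a::euclidean_space set \<Rightarrow> ('a \<Rightarrow> real \<Rightarrow> 'a) \<Rightarrow> ('a \<Rightarrow> real \<Rightarrow> real) \<Rightarrow> 'a measure
   \<Rightarrow> ('a \<Rightarrow> real) \<Rightarrow> ('a \<Rightarrow> real) \<Rightarrow> ('a \<Rightarrow> real) \<Rightarrow> real" where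
  "pairing_int \<Omega> b f \<sigma> u lam \<phi> =
     - (\<integral>x. \<phi> x * Fint f x (u_lam \<Omega> u lam x) \<partial>\<sigma>)
     - (\<integral>x. Bint b x (u x) \<bullet> grad \<phi> x \<partial>(lebesgue_on \<Omega>))"

end

theory Submission imports Defs begin


lemma lbint_ae_integrable:
  fixes h :: "real \<Rightarrow> 'b::{banach, second_countable_topology}"
  assumes hm: "h \<in> borel_measurable borel" and hb: "AE s in lborel. norm (h s) \<le> M"
  shows "set_integrable lborel (einterval (ereal a) (ereal c)) h"
  unfolding set_integrable_def
proof (rule integrableI_bounded_set[where A="{a..c}" and B="max M 0"])
  show "emeasure lborel {a..c} < \<infinity>" by (simp add: emeasure_lborel_Icc_eq)
  show "AE x in lborel. x \<in> {a..c} \<longrightarrow> norm (indicator (einterval (ereal a) (ereal c)) x *\<^sub>R h x) \<le> max M 0"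
    using hb by eventually_elim (auto simp: indicator_def max_def, meson norm_le_zero_iff order_trans)
  show "AE x in lborel. x \<notin> {a..c} \<longrightarrow> indicator (einterval (ereal a) (ereal c)) x *\<^sub>R h x = 0"
    by (auto simp: einterval_iff indicator_def)
qed (use hm in auto)

lemma lbint_lip_le:
  fixes h :: "real \<Rightarrow> 'b::{banach, second_countable_topology}"
  assumes hm: "h \<in> borel_measurable borel" and hb: "AE s in lborel. norm (h s) \<le> M"
    and le: "a \<le> c"
  shows "norm (interval_lebesgue_integral lborel (ereal a) (ereal c) h) \<le> M * (c - a)"
proof -
  have ee: "einterval (ereal a) (ereal c) = {a<..<c}" by (auto simp: einterval_def)
  have si: "set_integrable lborel (einterval (ereal a) (ereal c)) h"
    by (rule lbint_ae_integrable[OF hm hb])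
  have "norm (interval_lebesgue_integral lborel (ereal a) (ereal c) h)
      = norm (LINT x:einterval (ereal a) (ereal c)|lborel. h x)"
    using le by (simp add: interval_lebesgue_integral_def)
  also have "\<dots> \<le> (LINT x:einterval (ereal a) (ereal c)|lborel. norm (h x))"
    by (rule set_integral_norm_bound[OF si])
  also have "\<dots> \<le> (LINT x:einterval (ereal a) (ereal c)|lborel. M)"
    unfolding set_lebesgue_integral_def
  proof (rule integral_mono_AE)
    show "integrable lborel (\<lambda>x. indicator (einterval (ereal a) (ereal c)) x *\<^sub>R norm (h x))"
    proof -
      have "integrable lborel (\<lambda>x. norm (indicator (einterval (ereal a) (ereal c)) x *\<^sub>R h x))"
        using si integrable_norm unfolding set_integrable_def by blast
      then show ?thesis by simp
    qed
      
    have "integrable lborel (indicat_real {a<..<c})"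
      using le by (intro integrable_real_indicator) auto
    then show "integrable lborel (\<lambda>x. indicator (einterval (ereal a) (ereal c)) x *\<^sub>R M)"
      unfolding ee by simp
    show "AE x in lborel. indicator (einterval (ereal a) (ereal c)) x *\<^sub>R norm (h x) \<le> indicator (einterval (ereal a) (ereal c)) x *\<^sub>R M"
      using hb by eventually_elim (auto simp: indicator_def)
  qed
  also have "\<dots> = M * (c - a)"
    using le by (simp add: ee set_lebesgue_integral_def)
  finally show ?thesis .
qed

lemma lbint_lip:
  fixes h :: "real \<Rightarrow> 'b::{banach, second_countable_topology}"
  assumes hm: "h \<in> borel_measurable borel" and hb: "AE s in lborel. norm (h s) \<le> M"
  shows "norm (interval_lebesgue_integral lborel (ereal 0) (ereal t) h
             - interval_lebesgue_integral lborel (ereal 0) (ereal t') h) \<le> M * \<bar>t - t'\<bar>"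
proof -
  have sum: "interval_lebesgue_integral lborel (ereal 0) (ereal t') h + interval_lebesgue_integral lborel (ereal t') (ereal t) h
     = interval_lebesgue_integral lborel (ereal 0) (ereal t) h"
  proof (rule interval_integral_sum)
    show "interval_lebesgue_integrable lborel (min (ereal 0) (min (ereal t') (ereal t))) (max (ereal 0) (max (ereal t') (ereal t))) h"
    proof -
      obtain r1 where e1: "min (ereal 0) (min (ereal t') (ereal t)) = ereal r1"
        by (cases "min (ereal 0) (min (ereal t') (ereal t))") (auto simp: min_def split: if_splits)
      obtain r2 where e2: "max (ereal 0) (max (ereal t') (ereal t)) = ereal r2"
        by (cases "max (ereal 0) (max (ereal t') (ereal t))") (auto simp: max_def split: if_splits)
      have e3: "ereal r1 \<le> ereal r2" unfolding e1[symmetric] e2[symmetric]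
        by (rule order_trans[OF min.cobounded1 max.cobounded1])
      show ?thesis unfolding e1 e2 interval_lebesgue_integrable_def using e3 lbint_ae_integrable[OF hm hb, of r1 r2] by simp
    qed
  qed
  define A where "A = interval_lebesgue_integral lborel (ereal 0) (ereal t) h"
  define B where "B = interval_lebesgue_integral lborel (ereal 0) (ereal t') h"
  define C where "C = interval_lebesgue_integral lborel (ereal t') (ereal t) h"
  have "A - B = C" unfolding A_def B_def C_def sum[symmetric] by (rule add_diff_cancel_left')
  then have eq: "norm (A - B) = norm C" by simp
  show ?thesis
  proof (cases "t' \<le> t")
    case True
    then show ?thesis using lbint_lip_le[OF hm hb True] eq unfolding A_def B_def C_def by simp
  next
    case False
    have "C = - interval_lebesgue_integral lborel (ereal t) (ereal t') h"
      unfolding C_def by (rule interval_integral_endpoints_reverse)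
    then have "norm C = norm (interval_lebesgue_integral lborel (ereal t) (ereal t') h)" by simp
    then show ?thesis using lbint_lip_le[OF hm hb, of t t'] False eq unfolding A_def B_def by simp
  qed
qed



lemma joint_meas:
  fixes g :: "'a::euclidean_space \<Rightarrow> real \<Rightarrow> 'b::{banach,second_countable_topology}"
  assumes g: "(\<lambda>p. g (fst p) (snd p)) \<in> borel_measurable (restrict_space borel (\<Omega> \<times> UNIV))"
    and idN: "(\<lambda>x. x) \<in> measurable N borel" and sp: "space N \<subseteq> \<Omega>"
  shows "(\<lambda>p. g (fst p) (snd p)) \<in> borel_measurable (N \<Otimes>\<^sub>M lborel)"
proof -
  have "(\<lambda>p. (fst p, snd p)) \<in> measurable (N \<Otimes>\<^sub>M lborel) (borel \<Otimes>\<^sub>M borel)"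
  proof (rule measurable_Pair)
    show "fst \<in> measurable (N \<Otimes>\<^sub>M lborel) borel"
      using measurable_comp[OF measurable_fst idN] by (simp add: comp_def)
    show "snd \<in> measurable (N \<Otimes>\<^sub>M lborel) borel"
      using measurable_snd[of N lborel] by (simp add: measurable_lborel1)
  qed
  then have "(\<lambda>p. p) \<in> measurable (N \<Otimes>\<^sub>M lborel) borel" by (simp add: borel_prod)
  then have "(\<lambda>p. p) \<in> measurable (N \<Otimes>\<^sub>M lborel) (restrict_space borel (\<Omega> \<times> UNIV))"
    using sp by (intro measurable_restrict_space2) (auto simp: space_pair_measure)
  from measurable_comp[OF this g] show ?thesis by (simp add: comp_def)
qed

lemma lbint_comp_meas:
  fixes g :: "'a \<Rightarrow> real \<Rightarrow> 'b::{banach,second_countable_topology}"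
  assumes g[measurable]: "(\<lambda>p. g (fst p) (snd p)) \<in> borel_measurable (N \<Otimes>\<^sub>M lborel)"
    and w[measurable]: "w \<in> borel_measurable N"
  shows "(\<lambda>x. interval_lebesgue_integral lborel (ereal 0) (ereal (w x)) (g x)) \<in> borel_measurable N"
proof -
  have eq: "(\<lambda>x. interval_lebesgue_integral lborel (ereal 0) (ereal (w x)) (g x)) =
    (\<lambda>x. if 0 \<le> w x then (\<integral>y. of_bool (0 < y \<and> y < w x) *\<^sub>R g x y \<partial>lborel)
         else - (\<integral>y. of_bool (w x < y \<and> y < 0) *\<^sub>R g x y \<partial>lborel))"
    by (intro ext) (simp add: interval_lebesgue_integral_def set_lebesgue_integral_def einterval_iff indicator_def)
  have m1: "(\<lambda>(x,y). of_bool (0 < y \<and> y < w x) *\<^sub>R g x y) \<in> borel_measurable (N \<Otimes>\<^sub>M lborel)"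
    unfolding split_beta' by measurable
  have m2: "(\<lambda>(x,y). of_bool (w x < y \<and> y < 0) *\<^sub>R g x y) \<in> borel_measurable (N \<Otimes>\<^sub>M lborel)"
    unfolding split_beta' by measurable
  have i1: "(\<lambda>x. \<integral>y. of_bool (0 < y \<and> y < w x) *\<^sub>R g x y \<partial>lborel) \<in> borel_measurable N"
    using lborel.borel_measurable_lebesgue_integral[OF m1] by simp
  have i2: "(\<lambda>x. \<integral>y. of_bool (w x < y \<and> y < 0) *\<^sub>R g x y \<partial>lborel) \<in> borel_measurable N"
    using lborel.borel_measurable_lebesgue_integral[OF m2] by simp
  show ?thesis unfolding eq using i1 i2 by measurable
qed



lemma hpre_mono_set:
  assumes "A \<subseteq> B" shows "hausdorff_pre s d A \<le> hausdorff_pre s d B"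
  unfolding hausdorff_pre_def using assms by (intro INF_superset_mono) auto

lemma hpre_mono_delta:
  assumes "d \<le> d'" shows "hausdorff_pre s d' A \<le> hausdorff_pre s d A"
  unfolding hausdorff_pre_def using assms by (intro INF_superset_mono) (auto, meson order_trans)

lemma haus_mono:
  assumes "A \<subseteq> B" shows "hausdorff s A \<le> hausdorff s B"
  unfolding hausdorff_def using hpre_mono_set[OF assms] by (intro SUP_mono) auto

lemma haus_borel_null:
  fixes E :: "'a::euclidean_space set"
  assumes h0: "hausdorff s E = 0"
  shows "\<exists>E'. E' \<in> sets borel \<and> E \<subseteq> E' \<and> hausdorff s E' = 0"
proof -
  define dl where "dl = (\<lambda>j::nat. inverse (real (Suc j)))"
  have dlpos: "0 < dl j" for j unfolding dl_def by simp
  have p0: "hausdorff_pre s (dl j) E = 0" for j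
  proof -
    have "hausdorff_pre s (dl j) E \<le> hausdorff s E"
      unfolding hausdorff_def using dlpos[of j] by (intro SUP_upper) auto
    then show ?thesis using h0 by simp
  qed
  have ex: "\<forall>j. \<exists>C. (E \<subseteq> (\<Union>i. C i) \<and> (\<forall>i. bounded (C i) \<and> diameter (C i) \<le> dl j)) \<and>
        (\<Sum>i. ennreal (omega_s s * (diameter (C i) / 2) powr s)) < ennreal (dl j)"
  proof
    fix j
    have "hausdorff_pre s (dl j) E < ennreal (dl j)" using p0[of j] dlpos[of j] by simp
    then show "\<exists>C. (E \<subseteq> (\<Union>i. C i) \<and> (\<forall>i. bounded (C i) \<and> diameter (C i) \<le> dl j)) \<and>
        (\<Sum>i. ennreal (omega_s s * (diameter (C i) / 2) powr s)) < ennreal (dl j)"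
      unfolding hausdorff_pre_def INF_less_iff by blast
  qed
  obtain CC0 where CC0: "\<forall>j. (E \<subseteq> (\<Union>i. CC0 j i) \<and> (\<forall>i. bounded (CC0 j i) \<and> diameter (CC0 j i) \<le> dl j)) \<and>
        (\<Sum>i. ennreal (omega_s s * (diameter (CC0 j i) / 2) powr s)) < ennreal (dl j)"
    using choice[OF ex] by blast
  obtain CC where CC: "\<And>j. E \<subseteq> (\<Union>i. CC j i)" "\<And>j i. bounded (CC j i)" "\<And>j i. diameter (CC j i) \<le> dl j"
     "\<And>j. (\<Sum>i. ennreal (omega_s s * (diameter (CC j i) / 2) powr s)) < ennreal (dl j)"
  proof
    show "E \<subseteq> (\<Union>i. CC0 j i)" for j using CC0 by blast
    show "bounded (CC0 j i)" for j i using CC0 by blast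
    show "diameter (CC0 j i) \<le> dl j" for j i using CC0 by blast
    show "(\<Sum>i. ennreal (omega_s s * (diameter (CC0 j i) / 2) powr s)) < ennreal (dl j)" for j using CC0 by blast
  qed
  define E' where "E' = (\<Inter>j. \<Union>i. closure (CC j i))"
  have [measurable]: "closure (CC j i) \<in> sets borel" for j i by (simp add: borel_closed)
  have "E' \<in> sets borel" unfolding E'_def by measurable
  moreover have "E \<subseteq> E'"
  proof
    fix x assume "x \<in> E"
    have "x \<in> (\<Union>i. closure (CC j i))" for j
    proof -
      obtain i where "x \<in> CC j i" using CC(1)[of j] \<open>x \<in> E\<close> by blast
      then show ?thesis using closure_subset[of "CC j i"] by blast
    qed
    then show "x \<in> E'" unfolding E'_def by blast
  qed
  moreover have "hausdorff s E' = 0"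
  proof -
    have pj: "hausdorff_pre s (dl j) E' \<le> ennreal (dl j)" for j
    proof -
      have "hausdorff_pre s (dl j) E' \<le> (\<Sum>i. ennreal (omega_s s * (diameter (closure (CC j i)) / 2) powr s))"
        unfolding hausdorff_pre_def
      proof (rule INF_lower, safe)
        show "x \<in> E' \<Longrightarrow> x \<in> (\<Union>i. closure (CC j i))" for x unfolding E'_def by blast
        show "bounded (closure (CC j i))" for i using CC(2) by auto
        show "diameter (closure (CC j i)) \<le> dl j" for i using CC(3)[of j i] diameter_closure[OF CC(2)[of j i]] by simp
      qed
      also have "\<dots> = (\<Sum>i. ennreal (omega_s s * (diameter (CC j i) / 2) powr s))"
        using diameter_closure[OF CC(2)] by simp
      also have "\<dots> \<le> ennreal (dl j)" using CC(4)[of j] by simp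
      finally show ?thesis .
    qed
    have "hausdorff_pre s d E' \<le> 0" if "d > 0" for d
    proof (rule ennreal_le_epsilon)
      fix e :: real assume "0 < e"
      then obtain j where j: "inverse (real (Suc j)) < min e d" using \<open>d > 0\<close> reals_Archimedean by (metis min_less_iff_conj)
      have "hausdorff_pre s d E' \<le> hausdorff_pre s (dl j) E'"
        using j by (intro hpre_mono_delta) (auto simp: dl_def)
      also have "\<dots> \<le> ennreal (dl j)" by (rule pj)
      also have "\<dots> \<le> 0 + ennreal e" using j by (auto simp: dl_def intro!: ennreal_leI)
      finally show "hausdorff_pre s d E' \<le> 0 + ennreal e" .
    qed
    then show ?thesis unfolding hausdorff_def by (intro antisym SUP_least) auto
  qed
  ultimately show ?thesis by blast
qed



lemma mball_pos:
  fixes x :: "'a::euclidean_space"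
  assumes "r > 0" shows "measure lebesgue (ball x r) > 0"
  using content_ball_pos[OF assms, of x] by simp

lemma density_zero_empty:
  fixes x :: "'a::euclidean_space"
  assumes "e > 0" "E \<inter> ball x e = {}"
  shows "density_zero E x"
  unfolding density_zero_def
proof (rule tendsto_eventually)
  show "\<forall>\<^sub>F r in at_right 0. measure lebesgue (E \<inter> ball x r) / measure lebesgue (ball x r) = 0"
    using eventually_at_right_real[OF assms(1)]
  proof (rule eventually_mono)
    fix r assume "r \<in> {0<..<e}"
    then have "E \<inter> ball x r = {}" using assms(2) by auto
    then show "measure lebesgue (E \<inter> ball x r) / measure lebesgue (ball x r) = 0" by simp
  qed
qed

lemma density_zero_full:
  fixes x :: "'a::euclidean_space"
  assumes "e > 0" "ball x e \<subseteq> E"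
  shows "\<not> density_zero E x"
proof
  assume dz: "density_zero E x"
  have "((\<lambda>r. measure lebesgue (E \<inter> ball x r) / measure lebesgue (ball x r)) \<longlongrightarrow> 1) (at_right 0)"
  proof (rule tendsto_eventually)
    show "\<forall>\<^sub>F r in at_right 0. measure lebesgue (E \<inter> ball x r) / measure lebesgue (ball x r) = 1"
      using eventually_at_right_real[OF assms(1)]
    proof (rule eventually_mono)
      fix r assume "r \<in> {0<..<e}"
      then have "E \<inter> ball x r = ball x r" using assms(2) by auto
      then show "measure lebesgue (E \<inter> ball x r) / measure lebesgue (ball x r) = 1"
        using mball_pos[of r x] \<open>r \<in> {0<..<e}\<close> by simp
    qed
  qed
  moreover have "((\<lambda>r. measure lebesgue (E \<inter> ball x r) / measure lebesgue (ball x r)) \<longlongrightarrow> 0) (at_right 0)"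
    using dz unfolding density_zero_def .
  ultimately have "(1::real) = 0"
    using tendsto_unique[OF trivial_limit_at_right_real[THEN notI[where P="trivial_limit _", OF notE]]] by (meson tendsto_unique trivial_limit_at_right_real)
  then show False by simp
qed

lemma cont_apx:
  fixes w :: "'a::euclidean_space \<Rightarrow> real"
  assumes op: "open \<Omega>" and x: "x \<in> \<Omega>" and c: "continuous_on \<Omega> w"
  shows "apx_upper \<Omega> w x = ereal (w x)" "apx_lower \<Omega> w x = ereal (w x)"
proof -
  have cx: "isCont w x" using c op x continuous_on_eq_continuous_at by blast
  have near: "\<exists>e>0. ball x e \<subseteq> \<Omega> \<and> (\<forall>y\<in>ball x e. \<bar>w y - w x\<bar> < d)" if "d > 0" for d
  proof -
    obtain e1 where e1: "e1 > 0" "\<forall>y. dist y x < e1 \<longrightarrow> dist (w y) (w x) < d"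
      using cx \<open>d > 0\<close> unfolding continuous_at_eps_delta by (metis dist_commute)
    obtain e2 where e2: "e2 > 0" "ball x e2 \<subseteq> \<Omega>" using op x open_contains_ball by blast
    show ?thesis
      by (rule exI[of _ "min e1 e2"]) (use e1 e2 in \<open>auto simp: dist_real_def dist_commute\<close>)
  qed
  have up_in: "density_zero {y\<in>\<Omega>. w y > t} x" if tw: "t > w x" for t
  proof -
    obtain e where e: "e > 0" "ball x e \<subseteq> \<Omega>" "\<forall>y\<in>ball x e. \<bar>w y - w x\<bar> < t - w x"
      using near[of "t - w x"] tw by auto
    show ?thesis by (rule density_zero_empty[OF e(1)]) (use e(3) in auto)
  qed
  have up_out: "\<not> density_zero {y\<in>\<Omega>. w y > t} x" if tw: "t < w x" for t
  proof -
    obtain e where e: "e > 0" "ball x e \<subseteq> \<Omega>" "\<forall>y\<in>ball x e. \<bar>w y - w x\<bar> < w x - t"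
      using near[of "w x - t"] tw by auto
    show ?thesis by (rule density_zero_full[OF e(1)]) (use e(2,3) in auto)
  qed
  have lo_in: "density_zero {y\<in>\<Omega>. w y < t} x" if tw: "t < w x" for t
  proof -
    obtain e where e: "e > 0" "ball x e \<subseteq> \<Omega>" "\<forall>y\<in>ball x e. \<bar>w y - w x\<bar> < w x - t"
      using near[of "w x - t"] tw by auto
    show ?thesis by (rule density_zero_empty[OF e(1)]) (use e(3) in auto)
  qed
  have lo_out: "\<not> density_zero {y\<in>\<Omega>. w y < t} x" if tw: "t > w x" for t
  proof -
    obtain e where e: "e > 0" "ball x e \<subseteq> \<Omega>" "\<forall>y\<in>ball x e. \<bar>w y - w x\<bar> < t - w x"
      using near[of "t - w x"] tw by auto
    show ?thesis by (rule density_zero_full[OF e(1)]) (use e(2,3) in auto)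
  qed
  show "apx_upper \<Omega> w x = ereal (w x)"
    unfolding apx_upper_def
  proof (rule antisym)
    show "Inf (ereal ` {t. density_zero {y \<in> \<Omega>. t < w y} x}) \<le> ereal (w x)"
    proof (rule dense_ge)
      fix z assume "ereal (w x) < z"
      then show "Inf (ereal ` {t. density_zero {y \<in> \<Omega>. t < w y} x}) \<le> z"
      proof (cases z)
        case (real r)
        then have "r > w x" using \<open>ereal (w x) < z\<close> by simp
        then show ?thesis using up_in[of r] real by (intro Inf_lower) auto
      qed auto
    qed
    show "ereal (w x) \<le> Inf (ereal ` {t. density_zero {y \<in> \<Omega>. t < w y} x})"
    proof (rule Inf_greatest)
      fix z assume "z \<in> ereal ` {t. density_zero {y \<in> \<Omega>. t < w y} x}"
      then obtain t where "z = ereal t" "density_zero {y \<in> \<Omega>. t < w y} x" by auto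
      then show "ereal (w x) \<le> z" using up_out[of t] by (cases "t < w x") auto
    qed
  qed
  show "apx_lower \<Omega> w x = ereal (w x)"
    unfolding apx_lower_def
  proof (rule antisym)
    show "ereal (w x) \<le> Sup (ereal ` {t. density_zero {y \<in> \<Omega>. w y < t} x})"
    proof (rule dense_le)
      fix z assume "z < ereal (w x)"
      then show "z \<le> Sup (ereal ` {t. density_zero {y \<in> \<Omega>. w y < t} x})"
      proof (cases z)
        case (real r)
        then have "r < w x" using \<open>z < ereal (w x)\<close> by simp
        then show ?thesis using lo_in[of r] real by (intro Sup_upper) auto
      qed auto
    qed
    show "Sup (ereal ` {t. density_zero {y \<in> \<Omega>. w y < t} x}) \<le> ereal (w x)"
    proof (rule Sup_least)
      fix z assume "z \<in> ereal ` {t. density_zero {y \<in> \<Omega>. w y < t} x}"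
      then obtain t where "z = ereal t" "density_zero {y \<in> \<Omega>. w y < t} x" by auto
      then show "z \<le> ereal (w x)" using lo_out[of t] by (cases "t > w x") auto
    qed
  qed
qed

lemma cont_ulam:
  fixes w :: "'a::euclidean_space \<Rightarrow> real"
  assumes op: "open \<Omega>" and x: "x \<in> \<Omega>" and c: "continuous_on \<Omega> w"
  shows "u_lam \<Omega> w l x = w x"
  using cont_apx[OF assms] unfolding u_lam_def by (simp add: algebra_simps)

lemma ess_bound:
  fixes w :: "'a::euclidean_space \<Rightarrow> real"
  assumes op: "open \<Omega>" and x: "x \<in> \<Omega>" and c: "continuous_on \<Omega> w"
  shows "ereal \<bar>w x\<bar> \<le> Linf_norm \<Omega> w"
proof (rule ccontr)
  assume "\<not> ereal \<bar>w x\<bar> \<le> Linf_norm \<Omega> w"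
  then have lt: "Linf_norm \<Omega> w < ereal \<bar>w x\<bar>" by simp
  obtain c where c1: "Linf_norm \<Omega> w < ereal c" and c2: "c < \<bar>w x\<bar>"
  proof (cases "Linf_norm \<Omega> w")
    case (real r)
    then show ?thesis using lt that[of "(r + \<bar>w x\<bar>)/2"] by auto
  next
    case MInf
    then show ?thesis using that[of "\<bar>w x\<bar> - 1"] by auto
  next
    case PInf then show ?thesis using lt by auto
  qed
  have cx: "isCont w x" using c op x continuous_on_eq_continuous_at by blast
  obtain e1 where e1: "e1 > 0" "\<forall>y. dist y x < e1 \<longrightarrow> dist (w y) (w x) < \<bar>w x\<bar> - c"
    using cx c2 unfolding continuous_at_eps_delta by (metis dist_commute diff_gt_0_iff_gt)
  obtain e2 where e2: "e2 > 0" "ball x e2 \<subseteq> \<Omega>" using op x open_contains_ball by blast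
  define e where "e = min e1 e2"
  have e: "e > 0" "ball x e \<subseteq> \<Omega>" using e1 e2 unfolding e_def by auto
  have e3: "\<forall>y\<in>ball x e. c < \<bar>w y\<bar>"
  proof
    fix y assume "y \<in> ball x e"
    then have "dist y x < e1" unfolding e_def by (simp add: dist_commute)
    then have "\<bar>w y - w x\<bar> < \<bar>w x\<bar> - c" using e1(2) by (simp add: dist_real_def)
    then show "c < \<bar>w y\<bar>" by arith
  qed
  have "AE y in lebesgue_on \<Omega>. ereal \<bar>w y\<bar> \<le> Linf_norm \<Omega> w"
    unfolding Linf_norm_def by (rule esssup_AE)
  then have "AE y in lebesgue_on \<Omega>. y \<notin> ball x e"
  proof (rule eventually_mono)
    fix y assume "ereal \<bar>w y\<bar> \<le> Linf_norm \<Omega> w"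
    then have "\<bar>w y\<bar> < c" using c1 by (metis ereal_less_eq(3) leD linorder_le_less_linear order_le_less_trans)
    then show "y \<notin> ball x e" using e3 by force
  qed
  then have "AE y in lebesgue. y \<in> \<Omega> \<longrightarrow> y \<notin> ball x e"
    using op by (subst AE_restrict_space_iff[symmetric]) (auto simp: borel_open)
  then have "AE y in lebesgue. y \<notin> ball x e"
  proof (rule eventually_mono)
    fix y assume "y \<in> \<Omega> \<longrightarrow> y \<notin> ball x e"
    then show "y \<notin> ball x e" using e(2) by blast
  qed
  then have "emeasure lebesgue (ball x e) = 0"
    by (subst (asm) AE_iff_measurable[where N="ball x e"]) auto
  moreover have "measure lebesgue (ball x e) > 0" using mball_pos[OF e(1)] .
  ultimately show False by (simp add: measure_def)
qed



lemma mEball_borel: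
  fixes E :: "'a::euclidean_space set"
  assumes E: "E \<in> sets lebesgue"
  shows "(\<lambda>x. measure lebesgue (E \<inter> ball x r)) \<in> borel_measurable borel"
proof -
  obtain S N N' where SN: "E = S \<union> N" "N \<subseteq> N'" "N' \<in> null_sets lborel" "S \<in> sets lborel"
    using sets_completionE[OF E] by blast
  have eq: "measure lebesgue (E \<inter> ball x r) = measure lborel (S \<inter> ball x r)" for x
  proof -
    have "N \<inter> ball x r \<in> null_sets lebesgue"
      using SN(2,3) by (intro null_sets_completion_subset[OF _ null_sets_completionI[OF SN(3)]]) auto
    moreover have "S \<inter> ball x r \<in> sets lebesgue" using SN(4) by simp
    moreover have "E \<inter> ball x r = (S \<inter> ball x r) \<union> (N \<inter> ball x r)" using SN(1) by auto
    ultimately have "measure lebesgue (E \<inter> ball x r) = measure lebesgue (S \<inter> ball x r)"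
      by (simp add: measure_Un_null_set)
    also have "\<dots> = measure lborel (S \<inter> ball x r)" using SN(4) by simp
    finally show ?thesis .
  qed
  define Q where "Q = {p::'a \<times> 'a. snd p \<in> S \<and> dist (fst p) (snd p) < r}"
  have Q: "Q \<in> sets (borel \<Otimes>\<^sub>M lborel)"
  proof -
    have S': "S \<in> sets borel" using SN(4) by simp
    have "Q = {p \<in> space (borel \<Otimes>\<^sub>M lborel). snd p \<in> S \<and> dist (fst p) (snd p) < r}"
      unfolding Q_def by (simp add: space_pair_measure)
    also have "\<dots> \<in> sets (borel \<Otimes>\<^sub>M lborel)"
      using S' by measurable
    finally show ?thesis .
  qed
  have pre: "Pair x -` Q = S \<inter> ball x r" for x unfolding Q_def by (auto simp: ball_def)
  have "(\<lambda>x. emeasure lborel (Pair x -` Q)) \<in> borel_measurable borel"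
    by (rule lborel.measurable_emeasure_Pair[OF Q])
  then have "(\<lambda>x. enn2real (emeasure lborel (S \<inter> ball x r))) \<in> borel_measurable borel"
    unfolding pre by measurable
  then have "(\<lambda>x. measure lborel (S \<inter> ball x r)) \<in> borel_measurable borel"
    by (simp add: measure_def)
  then show ?thesis by (simp add: eq)
qed

lemma mball_eq:
  fixes x :: "'a::euclidean_space"
  assumes "r \<ge> 0"
  shows "measure lebesgue (ball x r) = r ^ DIM('a) * measure lborel (ball (0::'a) 1)"
  using content_ball_conv_unit_ball[OF assms, of x] by simp

lemma dz_seq:
  fixes E :: "'a::euclidean_space set"
  assumes E: "E \<in> sets lebesgue"
  shows "density_zero E x \<longleftrightarrow>
    (\<lambda>k. measure lebesgue (E \<inter> ball x (inverse (real (Suc k)))) / measure lebesgue (ball x (inverse (real (Suc k))))) \<longlonglongrightarrow> 0"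
    (is "_ \<longleftrightarrow> (\<lambda>k. ?\<rho> (inverse (real (Suc k)))) \<longlonglongrightarrow> 0")
proof
  assume dz: "density_zero E x"
  have fl: "filterlim (\<lambda>k. inverse (real (Suc k))) (at_right 0) sequentially"
    by (rule tendsto_imp_filterlim_at_right[OF LIMSEQ_inverse_real_of_nat]) simp
  show "(\<lambda>k. ?\<rho> (inverse (real (Suc k)))) \<longlonglongrightarrow> 0"
    using filterlim_compose[OF dz[unfolded density_zero_def] fl] .
next
  assume sq: "(\<lambda>k. ?\<rho> (inverse (real (Suc k)))) \<longlonglongrightarrow> 0"
  define n where "n = DIM('a)"
  define c0 where "c0 = measure lborel (ball (0::'a) 1)"
  have c0: "c0 > 0" unfolding c0_def by (rule content_ball_pos) simp
  have mb: "measure lebesgue (ball x r) = r ^ n * c0" if "r \<ge> 0" for r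
    unfolding n_def c0_def by (rule mball_eq[OF that])
  have mmono: "measure lebesgue (E \<inter> ball x r) \<le> measure lebesgue (E \<inter> ball x r')" if "r \<le> r'" for r r'
  proof (rule measure_mono_fmeasurable)
    show "E \<inter> ball x r \<subseteq> E \<inter> ball x r'" using that by auto
    show "E \<inter> ball x r \<in> sets lebesgue" by (rule sets.Int[OF E fmeasurableD[OF lmeasurable_ball]])
    have "ball x r' \<inter> E \<in> fmeasurable lebesgue"
      by (rule fmeasurable_Int_fmeasurable[OF lmeasurable_ball E])
    then show "E \<inter> ball x r' \<in> fmeasurable lebesgue" by (simp add: Int_commute)
  qed
  have rnn: "?\<rho> r \<ge> 0" for r by simp
  show "density_zero E x"
    unfolding density_zero_def tendsto_iff
  proof (intro allI impI)
    fix e :: real assume e: "e > 0"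
    have "e / 2 ^ n > 0" using e by simp
    then obtain K where K: "\<And>k. k \<ge> K \<Longrightarrow> ?\<rho> (inverse (real (Suc k))) < e / 2 ^ n"
      using sq unfolding lim_sequentially by (auto simp: dist_real_def)
    have ev: "eventually (\<lambda>r. r \<in> {0<..<inverse (real (Suc K))}) (at_right 0)"
      by (rule eventually_at_right_real) simp
    show "eventually (\<lambda>r. dist (?\<rho> r) 0 < e) (at_right 0)"
      using ev
    proof (rule eventually_mono)
      fix r assume r: "r \<in> {0<..<inverse (real (Suc K))}"
      then have r0: "r > 0" by simp
      have "r * real (Suc K) < 1" using r by (simp add: field_simps)
      then have inv: "real (Suc K) < 1 / r" using r0 by (simp add: field_simps)
      then have flK: "int (Suc K) \<le> \<lfloor>1 / r\<rfloor>" by (simp add: le_floor_iff)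
      define k where "k = nat \<lfloor>1 / r\<rfloor> - 1"
      have kK: "k \<ge> K" unfolding k_def using flK by linarith
      have kfl: "real (Suc k) = of_int \<lfloor>1 / r\<rfloor>" unfolding k_def using flK by linarith
      have a1: "r \<le> inverse (real (Suc k))"
      proof -
        have "real (Suc k) \<le> 1 / r" unfolding kfl by (rule of_int_floor_le)
        then show ?thesis using r0 by (simp add: field_simps)
      qed
      have a2: "inverse (real (Suc (Suc k))) < r"
      proof -
        have "1 / r < real (Suc k) + 1" unfolding kfl by (rule real_of_int_floor_add_one_gt)
        then have "1 / r < real (Suc (Suc k))" by simp
        then show ?thesis using r0 by (simp add: field_simps)
      qed
      define a where "a = inverse (real (Suc k))"
      define b where "b = inverse (real (Suc (Suc k)))"
      have a0: "a > 0" and b0: "b > 0" unfolding a_def b_def by auto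
      have ab: "a \<le> 2 * b" unfolding a_def b_def by (simp add: field_simps)
      have pw: "a ^ n \<le> 2 ^ n * b ^ n"
        using power_mono[OF ab, of n] a0 by (simp add: power_mult_distrib)
      have bn: "b ^ n > 0" using b0 by simp
      have q: "a ^ n / b ^ n \<le> 2 ^ n" using pw bn by (simp add: divide_le_eq)
      have gk: "?\<rho> a < e / 2 ^ n" unfolding a_def using K[OF kK] .
      have gk0: "?\<rho> a \<ge> 0" by (rule rnn)
      have "?\<rho> r = measure lebesgue (E \<inter> ball x r) / (r ^ n * c0)" using mb r0 by simp
      also have "\<dots> \<le> measure lebesgue (E \<inter> ball x a) / (b ^ n * c0)"
      proof (rule frac_le)
        show "0 \<le> measure lebesgue (E \<inter> ball x a)" by simp
        show "measure lebesgue (E \<inter> ball x r) \<le> measure lebesgue (E \<inter> ball x a)"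
          using a1 unfolding a_def by (rule mmono)
        show "0 < b ^ n * c0" using bn c0 by simp
        show "b ^ n * c0 \<le> r ^ n * c0"
          using a2 b0 c0 unfolding b_def by (intro mult_right_mono power_mono) auto
      qed
      also have "\<dots> = ?\<rho> a * (a ^ n / b ^ n)"
        using mb[of a] a0 bn c0 by (simp add: field_simps)
      also have "\<dots> \<le> ?\<rho> a * 2 ^ n"
        using q gk0 by (rule mult_left_mono)
      also have "\<dots> < e" using gk by (simp add: field_simps)
      finally have "?\<rho> r < e" .
      then show "dist (?\<rho> r) 0 < e" using rnn[of r] by (simp add: dist_real_def)
    qed
  qed
qed

lemma dz_borel:
  fixes E :: "'a::euclidean_space set"
  assumes E: "E \<in> sets lebesgue"
  shows "{x. density_zero E x} \<in> sets borel"
proof -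
  define G where "G = (\<lambda>k x. measure lebesgue (E \<inter> ball x (inverse (real (Suc k)))) / measure lebesgue (ball x (inverse (real (Suc k)))))"
  have Gm[measurable]: "G k \<in> borel_measurable borel" for k
  proof -
    have "G k = (\<lambda>x. measure lebesgue (E \<inter> ball x (inverse (real (Suc k)))) / ((inverse (real (Suc k))) ^ DIM('a) * measure lborel (ball (0::'a) 1)))"
    proof -
      have "measure lebesgue (ball x (inverse (real (Suc k)))) = (inverse (real (Suc k))) ^ DIM('a) * measure lborel (ball (0::'a) 1)" for x :: 'a
        by (rule mball_eq) simp
      then show ?thesis unfolding G_def by presburger
    qed
    also have "\<dots> \<in> borel_measurable borel"
      using mEball_borel[OF E] by measurable
    finally show ?thesis .
  qed
  have eq: "{x. density_zero E x} = {x \<in> space borel. \<forall>m::nat. \<exists>K::nat. \<forall>k\<ge>K. \<bar>G k x\<bar> < inverse (real (Suc m))}"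
  proof (intro set_eqI iffI)
    fix x assume "x \<in> {x. density_zero E x}"
    then have "(\<lambda>k. G k x) \<longlonglongrightarrow> 0" unfolding G_def using dz_seq[OF E] by simp
    then show "x \<in> {x \<in> space borel. \<forall>m::nat. \<exists>K::nat. \<forall>k\<ge>K. \<bar>G k x\<bar> < inverse (real (Suc m))}"
      unfolding lim_sequentially dist_real_def by simp
  next
    fix x assume x: "x \<in> {x \<in> space borel. \<forall>m::nat. \<exists>K::nat. \<forall>k\<ge>K. \<bar>G k x\<bar> < inverse (real (Suc m))}"
    have "(\<lambda>k. G k x) \<longlonglongrightarrow> 0"
      unfolding lim_sequentially dist_real_def
    proof (intro allI impI)
      fix r :: real assume "r > 0"
      then obtain m where m: "inverse (real (Suc m)) < r" using reals_Archimedean by blast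
      obtain K where "\<forall>k\<ge>K. \<bar>G k x\<bar> < inverse (real (Suc m))" using x by blast
      then show "\<exists>no. \<forall>n\<ge>no. \<bar>G n x - 0\<bar> < r" using m by force
    qed
    then show "x \<in> {x. density_zero E x}" unfolding G_def using dz_seq[OF E] by simp
  qed
  have "Measurable.pred borel (\<lambda>x. \<forall>m::nat. \<exists>K::nat. \<forall>k\<ge>K. \<bar>G k x\<bar> < inverse (real (Suc m)))"
    by measurable
  then show ?thesis unfolding eq by (simp add: pred_def)
qed

lemma dz_mono:
  fixes A B :: "'a::euclidean_space set"
  assumes A: "A \<in> sets lebesgue" and B: "B \<in> sets lebesgue" and AB: "A \<subseteq> B"
    and dz: "density_zero B x"
  shows "density_zero A x"
  unfolding density_zero_def
proof (rule tendsto_sandwich[where f="\<lambda>_. 0"])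
  show "\<forall>\<^sub>F r in at_right 0. 0 \<le> measure lebesgue (A \<inter> ball x r) / measure lebesgue (ball x r)"
    by simp
  show "\<forall>\<^sub>F r in at_right 0. measure lebesgue (A \<inter> ball x r) / measure lebesgue (ball x r)
      \<le> measure lebesgue (B \<inter> ball x r) / measure lebesgue (ball x r)"
  proof (rule always_eventually, intro allI divide_right_mono)
    fix r
    show "measure lebesgue (A \<inter> ball x r) \<le> measure lebesgue (B \<inter> ball x r)"
    proof (rule measure_mono_fmeasurable)
      show "A \<inter> ball x r \<subseteq> B \<inter> ball x r" using AB by auto
      show "A \<inter> ball x r \<in> sets lebesgue" by (rule sets.Int[OF A fmeasurableD[OF lmeasurable_ball]])
      have "ball x r \<inter> B \<in> fmeasurable lebesgue"
        by (rule fmeasurable_Int_fmeasurable[OF lmeasurable_ball B])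
      then show "B \<inter> ball x r \<in> fmeasurable lebesgue" by (simp add: Int_commute)
    qed
  qed simp
  show "((\<lambda>_. 0) \<longlongrightarrow> (0::real)) (at_right 0)" by simp
  show "((\<lambda>r. measure lebesgue (B \<inter> ball x r) / measure lebesgue (ball x r)) \<longlongrightarrow> 0) (at_right 0)"
    using dz unfolding density_zero_def .
qed

lemma level_sets_leb:
  fixes u :: "'a::euclidean_space \<Rightarrow> real"
  assumes O: "\<Omega> \<in> sets lebesgue" and u: "u \<in> borel_measurable (lebesgue_on \<Omega>)"
  shows "{y\<in>\<Omega>. t < u y} \<in> sets lebesgue" "{y\<in>\<Omega>. u y < t} \<in> sets lebesgue"
proof -
  have sp: "space (lebesgue_on \<Omega>) = \<Omega>" by simp
  have "{y\<in>space (lebesgue_on \<Omega>). t < u y} \<in> sets (lebesgue_on \<Omega>)" using u by measurable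
  then show "{y\<in>\<Omega>. t < u y} \<in> sets lebesgue" using O by (simp add: sets_restrict_space_iff)
  have "{y\<in>space (lebesgue_on \<Omega>). u y < t} \<in> sets (lebesgue_on \<Omega>)" using u by measurable
  then show "{y\<in>\<Omega>. u y < t} \<in> sets lebesgue" using O by (simp add: sets_restrict_space_iff)
qed

lemma rat_between:
  fixes t :: real and y :: ereal
  assumes "ereal t < y"
  shows "\<exists>q::rat. t < of_rat q \<and> ereal (of_rat q) < y"
proof (cases y)
  case (real r)
  then have "t < r" using assms by simp
  then obtain z where "z \<in> \<rat>" "t < z" "z < r" using Rats_dense_in_real by blast
  then show ?thesis using real by (auto elim!: Rats_cases)
next
  case PInf
  obtain z where "z \<in> \<rat>" "t < z" "z < t + 1" using Rats_dense_in_real[of t "t+1"] by auto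
  then show ?thesis using PInf by (auto elim!: Rats_cases)
next
  case MInf then show ?thesis using assms by simp
qed

lemma rat_between2:
  fixes t :: real and y :: ereal
  assumes "y < ereal t"
  shows "\<exists>q::rat. of_rat q < t \<and> y < ereal (of_rat q)"
proof (cases y)
  case (real r)
  then have "r < t" using assms by simp
  then obtain z where "z \<in> \<rat>" "r < z" "z < t" using Rats_dense_in_real by blast
  then show ?thesis using real by (auto elim!: Rats_cases)
next
  case MInf
  obtain z where "z \<in> \<rat>" "t - 1 < z" "z < t" using Rats_dense_in_real[of "t - 1" t] by auto
  then show ?thesis using MInf by (auto elim!: Rats_cases)
next
  case PInf then show ?thesis using assms by simp
qed

lemma apx_upper_meas:
  fixes u :: "'a::euclidean_space \<Rightarrow> real"
  assumes O: "\<Omega> \<in> sets lebesgue" and u: "u \<in> borel_measurable (lebesgue_on \<Omega>)"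
  shows "apx_upper \<Omega> u \<in> borel_measurable borel"
proof (rule borel_measurableI_less)
  fix y :: ereal
  have St: "{y\<in>\<Omega>. t < u y} \<in> sets lebesgue" for t using level_sets_leb[OF O u] by blast
  have eq: "{x \<in> space borel. apx_upper \<Omega> u x < y} = (\<Union>q\<in>{q::rat. ereal (of_rat q) < y}. {x. density_zero {z\<in>\<Omega>. of_rat q < u z} x})"
  proof (intro set_eqI iffI)
    fix x assume "x \<in> {x \<in> space borel. apx_upper \<Omega> u x < y}"
    then have "Inf (ereal ` {t. density_zero {z\<in>\<Omega>. t < u z} x}) < y" unfolding apx_upper_def by simp
    then obtain t where t: "density_zero {z\<in>\<Omega>. t < u z} x" "ereal t < y" unfolding Inf_less_iff by auto
    obtain q :: rat where q: "t < of_rat q" "ereal (of_rat q) < y" using rat_between[OF t(2)] by blast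
    have "density_zero {z\<in>\<Omega>. of_rat q < u z} x"
      by (rule dz_mono[OF St St _ t(1)]) (use q in auto)
    then show "x \<in> (\<Union>q\<in>{q::rat. ereal (of_rat q) < y}. {x. density_zero {z\<in>\<Omega>. of_rat q < u z} x})"
      using q by blast
  next
    fix x assume "x \<in> (\<Union>q\<in>{q::rat. ereal (of_rat q) < y}. {x. density_zero {z\<in>\<Omega>. of_rat q < u z} x})"
    then obtain q :: rat where q: "ereal (of_rat q) < y" "density_zero {z\<in>\<Omega>. of_rat q < u z} x" by blast
    have "Inf (ereal ` {t. density_zero {z\<in>\<Omega>. t < u z} x}) \<le> ereal (of_rat q)"
      using q(2) by (intro Inf_lower) auto
    then show "x \<in> {x \<in> space borel. apx_upper \<Omega> u x < y}" unfolding apx_upper_def using q(1) by auto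
  qed
  show "{x \<in> space borel. apx_upper \<Omega> u x < y} \<in> sets borel"
    unfolding eq by (intro sets.countable_UN) (auto intro: dz_borel[OF St])
qed

lemma apx_lower_meas:
  fixes u :: "'a::euclidean_space \<Rightarrow> real"
  assumes O: "\<Omega> \<in> sets lebesgue" and u: "u \<in> borel_measurable (lebesgue_on \<Omega>)"
  shows "apx_lower \<Omega> u \<in> borel_measurable borel"
proof (rule borel_measurableI_greater)
  fix y :: ereal
  have St: "{y\<in>\<Omega>. u y < t} \<in> sets lebesgue" for t using level_sets_leb[OF O u] by blast
  have eq: "{x \<in> space borel. y < apx_lower \<Omega> u x} = (\<Union>q\<in>{q::rat. y < ereal (of_rat q)}. {x. density_zero {z\<in>\<Omega>. u z < of_rat q} x})"
  proof (intro set_eqI iffI)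
    fix x assume "x \<in> {x \<in> space borel. y < apx_lower \<Omega> u x}"
    then have "y < Sup (ereal ` {t. density_zero {z\<in>\<Omega>. u z < t} x})" unfolding apx_lower_def by simp
    then obtain t where t: "density_zero {z\<in>\<Omega>. u z < t} x" "y < ereal t" unfolding less_Sup_iff by auto
    obtain q :: rat where q: "of_rat q < t" "y < ereal (of_rat q)" using rat_between2[OF t(2)] by blast
    have "density_zero {z\<in>\<Omega>. u z < of_rat q} x"
      by (rule dz_mono[OF St St _ t(1)]) (use q in auto)
    then show "x \<in> (\<Union>q\<in>{q::rat. y < ereal (of_rat q)}. {x. density_zero {z\<in>\<Omega>. u z < of_rat q} x})"
      using q by blast
  next
    fix x assume "x \<in> (\<Union>q\<in>{q::rat. y < ereal (of_rat q)}. {x. density_zero {z\<in>\<Omega>. u z < of_rat q} x})"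
    then obtain q :: rat where q: "y < ereal (of_rat q)" "density_zero {z\<in>\<Omega>. u z < of_rat q} x" by blast
    have "ereal (of_rat q) \<le> Sup (ereal ` {t. density_zero {z\<in>\<Omega>. u z < t} x})"
      using q(2) by (intro Sup_upper) auto
    then show "x \<in> {x \<in> space borel. y < apx_lower \<Omega> u x}" unfolding apx_lower_def using q(1) by auto
  qed
  show "{x \<in> space borel. y < apx_lower \<Omega> u x} \<in> sets borel"
    unfolding eq by (intro sets.countable_UN) (auto intro: dz_borel[OF St])
qed

lemma ulam_meas:
  fixes u :: "'a::euclidean_space \<Rightarrow> real"
  assumes O: "\<Omega> \<in> sets lebesgue" and u: "u \<in> borel_measurable (lebesgue_on \<Omega>)"
    and l: "l \<in> borel_measurable (restrict_space borel \<Omega>)"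
  shows "u_lam \<Omega> u l \<in> borel_measurable (restrict_space borel \<Omega>)"
proof -
  have [measurable]: "apx_upper \<Omega> u \<in> borel_measurable (restrict_space borel \<Omega>)"
    by (rule measurable_restrict_space1[OF apx_upper_meas[OF O u]])
  have [measurable]: "apx_lower \<Omega> u \<in> borel_measurable (restrict_space borel \<Omega>)"
    by (rule measurable_restrict_space1[OF apx_lower_meas[OF O u]])
  show ?thesis unfolding u_lam_def[abs_def] using l by measurable
qed



lemma f_bound:
  fixes \<sigma> \<mu>p \<mu>m :: "'a::euclidean_space measure" and g :: "'a \<Rightarrow> real"
  assumes fin: "emeasure \<sigma> (space \<sigma>) < \<infinity>"
    and sp: "sets \<mu>p = sets \<sigma>" "sets \<mu>m = sets \<sigma>"
    and lub: "\<forall>E\<in>sets \<sigma>. emeasure \<mu>p E + emeasure \<mu>m E \<le> emeasure \<sigma> E"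
    and int: "integrable \<sigma> g" and dens: "\<forall>E\<in>sets \<sigma>. (\<integral>x\<in>E. g x \<partial>\<sigma>) = measure \<mu>p E - measure \<mu>m E"
  shows "AE x in \<sigma>. \<bar>g x\<bar> \<le> 1"
proof -
  interpret finite_measure \<sigma> using fin by (intro finite_measureI) simp
  have gm[measurable]: "g \<in> borel_measurable \<sigma>" using int by (rule borel_measurable_integrable)
  have mp: "measure \<mu>p E \<le> measure \<sigma> E" "measure \<mu>m E \<le> measure \<sigma> E" if E: "E \<in> sets \<sigma>" for E
  proof -
    have "emeasure \<mu>p E \<le> emeasure \<sigma> E" "emeasure \<mu>m E \<le> emeasure \<sigma> E"
      using lub E by (auto intro: order_trans[OF _ bspec[OF lub E]] add_increasing2 add_increasing)
    moreover have fin: "emeasure \<sigma> E < top" by (simp add: emeasure_eq_measure)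
    ultimately show "measure \<mu>p E \<le> measure \<sigma> E" "measure \<mu>m E \<le> measure \<sigma> E"
      unfolding measure_def using enn2real_mono[OF _ fin] by auto
  qed
  have key: "AE x in \<sigma>. x \<notin> E" if E: "E \<in> sets \<sigma>" and pos: "\<And>x. x \<in> E \<Longrightarrow> h x > 0"
    and hdef: "h = (\<lambda>x. c * g x + d)" and ineq: "(\<integral>x. indicator E x * h x \<partial>\<sigma>) \<le> 0" for E h c d
  proof -
    have hi: "integrable \<sigma> (\<lambda>x. indicator E x * h x)"
      unfolding hdef using int E by (auto simp: distrib_left intro!: integrable_mult_indicator[where 'b=real, simplified] integrable_add)
    have nn: "AE x in \<sigma>. 0 \<le> indicator E x * h x" using pos by (auto simp: indicator_def less_imp_le)
    have "(\<integral>x. indicator E x * h x \<partial>\<sigma>) = 0"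
      using integral_nonneg_AE[OF nn] ineq by simp
    then have "AE x in \<sigma>. indicator E x * h x = 0" using integral_nonneg_eq_0_iff_AE[OF hi nn] by simp
    then show ?thesis by eventually_elim (use pos in \<open>auto simp: indicator_def split: if_splits, fastforce\<close>)
  qed
  define E1 where "E1 = {x\<in>space \<sigma>. g x > 1}"
  define E2 where "E2 = {x\<in>space \<sigma>. g x < -1}"
  have E1[measurable]: "E1 \<in> sets \<sigma>" unfolding E1_def by measurable
  have E2[measurable]: "E2 \<in> sets \<sigma>" unfolding E2_def by measurable
  have a1: "AE x in \<sigma>. x \<notin> E1"
  proof (rule key[OF E1, where c=1 and d="-1"])
    show "x \<in> E1 \<Longrightarrow> 0 < g x - 1" for x by (simp add: E1_def)
    have "(\<integral>x. indicator E1 x * (g x - 1) \<partial>\<sigma>) = (\<integral>x\<in>E1. g x \<partial>\<sigma>) - measure \<sigma> E1"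
      unfolding set_lebesgue_integral_def
      using int by (simp add: right_diff_distrib integral_diff integrable_mult_indicator[where 'b=real, simplified] emeasure_eq_measure)
    also have "\<dots> \<le> 0"
    proof -
      have "(\<integral>x\<in>E1. g x \<partial>\<sigma>) = measure \<mu>p E1 - measure \<mu>m E1" using dens E1 by blast
      moreover have "0 \<le> measure \<mu>m E1" by (rule measure_nonneg)
      ultimately show ?thesis using mp[OF E1] by linarith
    qed
    finally show "(\<integral>x. indicator E1 x * (g x - 1) \<partial>\<sigma>) \<le> 0" .
  qed simp
  have a2: "AE x in \<sigma>. x \<notin> E2"
  proof (rule key[OF E2, where c="-1" and d="-1"])
    show "x \<in> E2 \<Longrightarrow> 0 < -1 * g x + - 1" for x by (simp add: E2_def)
    have i1: "integrable \<sigma> (\<lambda>x. indicator E2 x * g x)" using integrable_mult_indicator[OF E2 int] by simp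
    have i2: "integrable \<sigma> (indicator E2 :: _ \<Rightarrow> real)"
      using E2 by (intro integrable_real_indicator) (auto simp: emeasure_eq_measure)
    have "(\<integral>x. indicator E2 x * (-1 * g x + -1) \<partial>\<sigma>) = (\<integral>x. - (indicator E2 x * g x) - indicator E2 x \<partial>\<sigma>)"
      by (intro Bochner_Integration.integral_cong) (auto simp: algebra_simps)
    also have "\<dots> = - (\<integral>x. indicator E2 x * g x \<partial>\<sigma>) - (\<integral>x. indicator E2 x \<partial>\<sigma>)"
      using Bochner_Integration.integral_diff[OF integrable_minus[OF i1] i2] by simp
    also have "\<dots> = - (\<integral>x\<in>E2. g x \<partial>\<sigma>) - measure \<sigma> E2"
      using E2 sets.sets_into_space[OF E2] by (simp add: set_lebesgue_integral_def Int_absorb2)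
    finally have "(\<integral>x. indicator E2 x * (-1 * g x + -1) \<partial>\<sigma>) = - (\<integral>x\<in>E2. g x \<partial>\<sigma>) - measure \<sigma> E2" .
    also have "\<dots> \<le> 0"
    proof -
      have "(\<integral>x\<in>E2. g x \<partial>\<sigma>) = measure \<mu>p E2 - measure \<mu>m E2" using dens E2 by blast
      moreover have "0 \<le> measure \<mu>p E2" by (rule measure_nonneg)
      ultimately show ?thesis using mp[OF E2] by linarith
    qed
    finally show "(\<integral>x. indicator E2 x * (-1 * g x + - 1) \<partial>\<sigma>) \<le> 0" .
  qed simp
  show ?thesis using a1 a2 AE_space by eventually_elim (auto simp: E1_def E2_def)
qed

lemma fubini_swap:
  fixes \<sigma> :: "'a measure" and f :: "'a \<Rightarrow> real \<Rightarrow> real"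
  assumes sf: "sigma_finite_measure \<sigma>"
    and fm: "(\<lambda>p. f (fst p) (snd p)) \<in> borel_measurable (\<sigma> \<Otimes>\<^sub>M lborel)"
    and ae: "\<And>t. AE x in \<sigma>. \<bar>f x t\<bar> \<le> 1"
  shows "AE x in \<sigma>. AE s in lborel. \<bar>f x s\<bar> \<le> 1"
proof -
  interpret pair_sigma_finite \<sigma> lborel
    using sf by (intro pair_sigma_finite.intro lborel.sigma_finite_measure_axioms)
  have "{p \<in> space (\<sigma> \<Otimes>\<^sub>M lborel). \<bar>f (fst p) (snd p)\<bar> \<le> 1} \<in> sets (\<sigma> \<Otimes>\<^sub>M lborel)"
    using fm by measurable
  from AE_commute[OF this] show ?thesis using ae by simp
qed



lemma bdd_cont_supp:
  fixes g :: "'a::euclidean_space \<Rightarrow> 'b::real_normed_vector"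
  assumes c: "continuous_on UNIV g" and K: "compact K" and z: "\<And>x. x \<notin> K \<Longrightarrow> g x = 0"
  shows "\<exists>B. \<forall>x. norm (g x) \<le> B"
proof -
  have "compact (g ` K)" by (rule compact_continuous_image[OF continuous_on_subset[OF c] K]) simp
  then have "bounded (g ` K)" by (rule compact_imp_bounded)
  then obtain B where B: "\<forall>y\<in>g ` K. norm y \<le> B" unfolding bounded_iff by blast
  show ?thesis
  proof (intro exI allI)
    fix x show "norm (g x) \<le> max B 0" using B z[of x] by (cases "x \<in> K") auto
  qed
qed

lemma C1c_facts:
  fixes \<phi> :: "'a::euclidean_space \<Rightarrow> real"
  assumes "C1c \<Omega> \<phi>"
  shows "continuous_on UNIV \<phi>" "\<exists>B. \<forall>x. \<bar>\<phi> x\<bar> \<le> B"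
    "continuous_on UNIV (grad \<phi>)" "\<exists>B. \<forall>x. norm (grad \<phi> x) \<le> B"
    "closure {x. \<phi> x \<noteq> 0} \<subseteq> \<Omega>"
proof -
  define K where "K = closure {x. \<phi> x \<noteq> 0}"
  have K: "compact K" "K \<subseteq> \<Omega>" using assms unfolding C1c_def K_def by auto
  have ck: "Ck (Suc 0) UNIV \<phi>" using assms unfolding C1c_def by (simp only: One_nat_def)
  then have ck2: "(\<forall>x\<in>UNIV. \<phi> differentiable (at x)) \<and> (\<forall>i\<in>Basis. continuous_on UNIV (pderiv \<phi> i))"
    by (simp only: Ck.simps)
  have diff: "\<phi> differentiable (at x)" for x using ck2 by blast
  have pc: "continuous_on UNIV (pderiv \<phi> i)" if "i \<in> Basis" for i
    using ck2 that by blast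
  show c: "continuous_on UNIV \<phi>"
    by (rule continuous_at_imp_continuous_on) (use diff differentiable_imp_continuous_within in blast)
  have z: "\<phi> x = 0" if "x \<notin> K" for x using that closure_subset[of "{x. \<phi> x \<noteq> 0}"] unfolding K_def by blast
  show "\<exists>B. \<forall>x. \<bar>\<phi> x\<bar> \<le> B" using bdd_cont_supp[OF c K(1) z] by simp
  have pz: "pderiv \<phi> i x = 0" if "x \<notin> K" for x i
  proof -
    have "open (- K)" using K(1) compact_imp_closed by blast
    have d1: "(\<phi> has_derivative frechet_derivative \<phi> (at x)) (at x)"
      using diff[of x] frechet_derivative_works by blast
    have d2: "(\<phi> has_derivative (\<lambda>_. 0)) (at x)"
    proof (rule has_derivative_transform_within_open[OF has_derivative_const \<open>open (- K)\<close>])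
      show "x \<in> - K" using that by simp
      show "\<And>y. y \<in> - K \<Longrightarrow> 0 = \<phi> y" using z by simp
    qed
    have "frechet_derivative \<phi> (at x) = (\<lambda>_. 0)" using has_derivative_unique[OF d1 d2] .
    then show ?thesis unfolding pderiv_def by simp
  qed
  show gc: "continuous_on UNIV (grad \<phi>)"
    unfolding grad_def[abs_def] by (intro continuous_on_sum continuous_on_scaleR pc continuous_on_const)
  have gz: "grad \<phi> x = 0" if "x \<notin> K" for x unfolding grad_def using pz[OF that] by simp
  show "\<exists>B. \<forall>x. norm (grad \<phi> x) \<le> B" using bdd_cont_supp[OF gc K(1) gz] by simp
  show "closure {x. \<phi> x \<noteq> 0} \<subseteq> \<Omega>" using K unfolding K_def by simp
qed


theorem lemma8p7:
  fixes \<Omega> :: "'a::euclidean_space set"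
    and b :: "'a \<Rightarrow> real \<Rightarrow> 'a"
    and \<mu>p \<mu>m :: "real \<Rightarrow> 'a measure"
    and \<sigma> :: "'a measure"
    and f :: "'a \<Rightarrow> real \<Rightarrow> real"
    and u :: "'a \<Rightarrow> real"
    and v :: "nat \<Rightarrow> 'a \<Rightarrow> real"
    and lam \<Lambda> \<phi> :: "'a \<Rightarrow> real"
  assumes dim: "DIM('a) \<ge> 2"
    and open_\<Omega>: "open \<Omega>"
    \<comment> \<open>(b1)\<close>
    and b1_meas: "(\<lambda>p. b (fst p) (snd p)) \<in> borel_measurable (restrict_space borel (\<Omega> \<times> UNIV))"
    and b1_bdd: "\<exists>M. \<forall>x\<in>\<Omega>. \<forall>t. norm (b x t) \<le> M"
    \<comment> \<open>(b2)\<close>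
    and b2: "AE x in lebesgue_on \<Omega>. continuous_on UNIV (b x)"
    \<comment> \<open>(b3): div b_t = \<mu>p t - \<mu>m t (Jordan decomposition), a finite Radon measure\<close>
    and b3: "\<And>t. div_measure \<Omega> (\<lambda>x. b x t) (\<mu>p t) (\<mu>m t)"
    \<comment> \<open>(b4): \<sigma> = \<Or>_t |div b_t| is a finite Radon measure vanishing on H^{N-1}-null sets\<close>
    and b4_lub: "is_measure_lub \<Omega> (\<lambda>t E. emeasure (\<mu>p t) E + emeasure (\<mu>m t) E) \<sigma>"
    and b4_fin: "emeasure \<sigma> \<Omega> < \<infinity>"
    and b4_null: "\<And>E. E \<in> sets \<sigma> \<Longrightarrow> hausdorff (real (DIM('a)) - 1) E = 0 \<Longrightarrow> emeasure \<sigma> E = 0"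
    \<comment> \<open>f(\<cdot>,t) = d div b_t / d\<sigma>, chosen jointly Borel\<close>
    and f_meas: "(\<lambda>p. f (fst p) (snd p)) \<in> borel_measurable (restrict_space borel (\<Omega> \<times> UNIV))"
    and f_dens: "\<And>t. integrable \<sigma> (\<lambda>x. f x t) \<and>
                  (\<forall>E\<in>sets \<sigma>. (\<integral>x\<in>E. f x t \<partial>\<sigma>) = measure (\<mu>p t) E - measure (\<mu>m t) E)"
    \<comment> \<open>u \<in> BV \<inter> L^\<infinity>\<close>
    and u_BV: "BV \<Omega> u" and u_Linf: "Linf \<Omega> u"
    and lam_meas: "lam \<in> borel_measurable (restrict_space borel \<Omega>)"
    and lam_range: "\<And>x. x \<in> \<Omega> \<Longrightarrow> 0 \<le> lam x \<and> lam x \<le> 1"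
    \<comment> \<open>the approximating sequence\<close>
    and v_smooth: "\<And>n. Cinf \<Omega> (v n) \<and> BV \<Omega> (v n)"
    and v_strict: "strictly_conv \<Omega> v u"
    and v_pointwise: "\<exists>E. hausdorff (real (DIM('a)) - 1) E = 0 \<and>
                        (\<forall>x\<in>\<Omega> - E. (\<lambda>n. v n x) \<longlonglongrightarrow> u_lam \<Omega> u lam x)"
    and v_bound: "\<And>n. n \<ge> 1 \<Longrightarrow> Linf_norm \<Omega> (v n) \<le> ereal (1 + 1 / real n) * Linf_norm \<Omega> u"
    \<comment> \<open>the test data\<close>
    and \<Lambda>_meas: "\<Lambda> \<in> borel_measurable (restrict_space borel \<Omega>)"
    and \<Lambda>_range: "\<And>x. x \<in> \<Omega> \<Longrightarrow> 0 \<le> \<Lambda> x \<and> \<Lambda> x \<le> 1"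
    and \<phi>_C1c: "C1c \<Omega> \<phi>"
  shows "(\<lambda>n. pairing_int \<Omega> b f \<sigma> (v n) \<Lambda> \<phi>) \<longlonglongrightarrow> pairing_int \<Omega> b f \<sigma> u lam \<phi>"
proof -
  have sets\<sigma>: "sets \<sigma> = sets (restrict_space borel \<Omega>)" using b4_lub unfolding is_measure_lub_def by blast
  have sp\<sigma>: "space \<sigma> = \<Omega>"
    using sets_eq_imp_space_eq[OF sets\<sigma>] by (simp add: space_restrict_space)
  have Obor: "\<Omega> \<in> sets borel" using open_\<Omega> by (rule borel_open)
  have Oleb: "\<Omega> \<in> sets lebesgue" using Obor by simp
  interpret sfin: finite_measure \<sigma> using b4_fin sp\<sigma> by (intro finite_measureI) simp
  have e\<sigma>: "measurable \<sigma> (borel :: 'a measure) = measurable (restrict_space borel \<Omega>) borel"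
    by (rule measurable_cong_sets[OF sets\<sigma> refl])
  have e\<sigma>r: "measurable \<sigma> (borel :: real measure) = measurable (restrict_space borel \<Omega>) borel"
    by (rule measurable_cong_sets[OF sets\<sigma> refl])
  have "(\<lambda>x::'a. x) \<in> measurable (restrict_space borel \<Omega>) borel"
    by (rule measurable_restrict_space1) simp
  then have id\<sigma>: "(\<lambda>x. x) \<in> measurable \<sigma> borel" unfolding e\<sigma> .
  have meas\<sigma>: "g \<in> borel_measurable \<sigma>" if "g \<in> borel_measurable (restrict_space borel \<Omega>)" for g :: "'a \<Rightarrow> real"
    using that unfolding e\<sigma>r .
  have idL: "(\<lambda>x. x) \<in> measurable (lebesgue_on \<Omega>) borel"
  proof -
    have "(\<lambda>x. x) \<in> measurable lborel borel" by simp
    then have "(\<lambda>x. x) \<in> measurable lebesgue borel" by (rule measurable_completion)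
    then show ?thesis by (rule measurable_restrict_space1)
  qed
  have slice: "g x \<in> borel_measurable borel"
    if g: "(\<lambda>p. g (fst p) (snd p)) \<in> borel_measurable (restrict_space borel (\<Omega> \<times> UNIV))" and x: "x \<in> \<Omega>"
    for g :: "'a \<Rightarrow> real \<Rightarrow> 'c::{banach,second_countable_topology}" and x
  proof -
    have "(\<lambda>s::real. (x, s)) \<in> measurable borel (borel \<Otimes>\<^sub>M borel)" by measurable
    then have P: "(\<lambda>s::real. (x, s)) \<in> measurable borel (borel :: ('a \<times> real) measure)" by (simp add: borel_prod)
    have "(\<lambda>s::real. (x, s)) \<in> measurable borel (restrict_space borel (\<Omega> \<times> (UNIV :: real set)))"
      by (subst measurable_restrict_space2_iff) (use P x in auto)
    from measurable_comp[OF this g] show ?thesis by (simp add: comp_def)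
  qed
  obtain M0 where M0: "\<forall>x\<in>\<Omega>. \<forall>t. norm (b x t) \<le> M0" using b1_bdd by blast
  define M where "M = max M0 0"
  have M1: "norm (b x t) \<le> M" if xO: "x \<in> \<Omega>" for x t
  proof -
    have "norm (b x t) \<le> M0" using M0 xO by blast
    then show ?thesis unfolding M_def by (rule max.coboundedI1)
  qed
  have M2: "M \<ge> 0" unfolding M_def by simp
  note M = M1 M2
  have Blip: "norm (Bint b x t - Bint b x t') \<le> M * \<bar>t - t'\<bar>" if x: "x \<in> \<Omega>" for x t t'
    unfolding Bint_def by (rule lbint_lip[OF slice[OF b1_meas x]]) (use M(1)[OF x] in auto)
  have Bbd: "norm (Bint b x t) \<le> M * \<bar>t\<bar>" if x: "x \<in> \<Omega>" for x t
    using Blip[OF x, of t 0] by (simp add: Bint_def)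
  have fae: "AE x in \<sigma>. \<bar>f x t\<bar> \<le> 1" for t
  proof (rule f_bound)
    show "emeasure \<sigma> (space \<sigma>) < \<infinity>" using b4_fin sp\<sigma> by simp
    have fb: "finite_borel_on \<Omega> (\<mu>p t)" "finite_borel_on \<Omega> (\<mu>m t)" using b3[of t] unfolding div_measure_def by auto
    show "sets (\<mu>p t) = sets \<sigma>" "sets (\<mu>m t) = sets \<sigma>" using fb sets\<sigma> unfolding finite_borel_on_def by auto
    show "\<forall>E\<in>sets \<sigma>. emeasure (\<mu>p t) E + emeasure (\<mu>m t) E \<le> emeasure \<sigma> E"
      using b4_lub unfolding is_measure_lub_def by blast
    show "integrable \<sigma> (\<lambda>x. f x t)" using f_dens by blast
    show "\<forall>E\<in>sets \<sigma>. (\<integral>x\<in>E. f x t \<partial>\<sigma>) = measure (\<mu>p t) E - measure (\<mu>m t) E" using f_dens by blast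
  qed
  have fjoint: "(\<lambda>p. f (fst p) (snd p)) \<in> borel_measurable (\<sigma> \<Otimes>\<^sub>M lborel)"
    by (rule joint_meas[OF f_meas id\<sigma>]) (simp add: sp\<sigma>)
  have AEf: "AE x in \<sigma>. AE s in lborel. \<bar>f x s\<bar> \<le> 1"
    by (rule fubini_swap[OF _ fjoint fae]) unfold_locales
  have Flip: "\<bar>Fint f x t - Fint f x t'\<bar> \<le> \<bar>t - t'\<bar>"
    if x: "x \<in> \<Omega>" and ax: "AE s in lborel. \<bar>f x s\<bar> \<le> 1" for x t t'
    using lbint_lip[OF slice[OF f_meas x], of 1 t t'] ax unfolding Fint_def by simp
  have Fbd: "\<bar>Fint f x t\<bar> \<le> \<bar>t\<bar>"
    if x: "x \<in> \<Omega>" and ax: "AE s in lborel. \<bar>f x s\<bar> \<le> 1" for x t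
    using Flip[OF x ax, of t 0] by (simp add: Fint_def)
  obtain E where E: "hausdorff (real (DIM('a)) - 1) E = 0"
    "\<And>x. x \<in> \<Omega> - E \<Longrightarrow> (\<lambda>n. v n x) \<longlonglongrightarrow> u_lam \<Omega> u lam x"
    using v_pointwise by blast
  obtain E' where E': "E' \<in> sets borel" "E \<subseteq> E'" "hausdorff (real (DIM('a)) - 1) E' = 0"
    using haus_borel_null[OF E(1)] by blast
  have E''s: "E' \<inter> \<Omega> \<in> sets \<sigma>" unfolding sets\<sigma> using E'(1) Obor
    by (subst sets_restrict_space_iff) auto
  have "hausdorff (real (DIM('a)) - 1) (E' \<inter> \<Omega>) = 0"
    using haus_mono[of "E' \<inter> \<Omega>" E' "real (DIM('a)) - 1"] E'(3) by simp
  then have "emeasure \<sigma> (E' \<inter> \<Omega>) = 0" using b4_null[OF E''s] by simp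
  then have AEconv: "AE x in \<sigma>. (\<lambda>n. v n x) \<longlonglongrightarrow> u_lam \<Omega> u lam x"
  proof -
    assume z: "emeasure \<sigma> (E' \<inter> \<Omega>) = 0"
    have "AE x in \<sigma>. x \<notin> E' \<inter> \<Omega>" using z E''s by (intro AE_not_in null_setsI)
    then show ?thesis using AE_space
    proof (eventually_elim)
      case (elim x)
      then show ?case using E(2) E'(2) sp\<sigma> by blast
    qed
  qed
  have vcont: "continuous_on \<Omega> (v n)" for n
  proof -
    have "Ck 0 \<Omega> (v n)" using v_smooth[of n] unfolding Cinf_def by blast
    then show ?thesis by simp
  qed
  define L where "L = Linf_norm \<Omega> u"
  have Lfin: "L < \<infinity>" using u_Linf unfolding Linf_def L_def by simp
  define K where "K = 2 * max 0 (real_of_ereal L)"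
  have K0: "K \<ge> 0" unfolding K_def by simp
  have vK: "\<bar>v n x\<bar> \<le> K" if n: "n \<ge> 1" and x: "x \<in> \<Omega>" for n x
  proof -
    have "ereal \<bar>v n x\<bar> \<le> ereal (1 + 1 / real n) * L"
      using ess_bound[OF open_\<Omega> x vcont[of n]] v_bound[OF n] unfolding L_def by (rule order_trans)
    moreover have "1 + 1 / real n \<le> 2" using n by (simp add: field_simps)
    ultimately show ?thesis using Lfin
    proof (cases L)
      case (real l)
      assume a: "ereal \<bar>v n x\<bar> \<le> ereal (1 + 1 / real n) * L" "1 + 1 / real n \<le> 2"
      then have "\<bar>v n x\<bar> \<le> (1 + 1 / real n) * l" using real by simp
      also have "\<dots> \<le> 2 * max 0 l"
      proof (cases "l \<ge> 0")
        case True then show ?thesis using a(2) by (intro mult_mono) auto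
      next
        case False
        then have "(1 + 1 / real n) * l \<le> 0" by (intro mult_nonneg_nonpos) auto
        then show ?thesis by simp
      qed
      finally show ?thesis using real by (simp add: K_def)
    next
      case MInf
      assume a: "ereal \<bar>v n x\<bar> \<le> ereal (1 + 1 / real n) * L"
      have "0 \<le> 1 / real n" by simp
      then have "0 < 1 + 1 / real n" by linarith
      then show ?thesis using a MInf by simp
    qed auto
  qed
  have u_meas: "u \<in> borel_measurable (lebesgue_on \<Omega>)" using u_Linf unfolding Linf_def by blast
  have ul_meas: "u_lam \<Omega> u lam \<in> borel_measurable \<sigma>"
    by (rule meas\<sigma>[OF ulam_meas[OF Oleb u_meas lam_meas]])
  have v\<sigma>: "v n \<in> borel_measurable \<sigma>" for n
    by (rule meas\<sigma>[OF borel_measurable_continuous_on_restrict[OF vcont]])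
  obtain \<Phi> where \<Phi>: "\<And>x. \<bar>\<phi> x\<bar> \<le> \<Phi>" using C1c_facts(2)[OF \<phi>_C1c] by blast
  obtain G0 where G0: "\<And>x. norm (grad \<phi> x) \<le> G0" using C1c_facts(4)[OF \<phi>_C1c] by blast
  have \<phi>b: "\<phi> \<in> borel_measurable borel"
    using C1c_facts(1)[OF \<phi>_C1c] by (rule borel_measurable_continuous_onI)
  have gb: "grad \<phi> \<in> borel_measurable borel"
    using C1c_facts(3)[OF \<phi>_C1c] by (rule borel_measurable_continuous_onI)
  have \<phi>\<sigma>: "\<phi> \<in> borel_measurable \<sigma>" using measurable_comp[OF id\<sigma> \<phi>b] by (simp add: comp_def)
  have Fm: "(\<lambda>x. Fint f x (w x)) \<in> borel_measurable \<sigma>" if "w \<in> borel_measurable \<sigma>" for w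
    unfolding Fint_def by (rule lbint_comp_meas[OF fjoint that])
  have sig_lim: "(\<lambda>n. \<integral>x. \<phi> x * Fint f x (u_lam \<Omega> (v n) \<Lambda> x) \<partial>\<sigma>) \<longlonglongrightarrow> (\<integral>x. \<phi> x * Fint f x (u_lam \<Omega> u lam x) \<partial>\<sigma>)"
  proof -
    have eqn: "(\<integral>x. \<phi> x * Fint f x (u_lam \<Omega> (v n) \<Lambda> x) \<partial>\<sigma>) = (\<integral>x. \<phi> x * Fint f x (v n x) \<partial>\<sigma>)" for n
      by (intro Bochner_Integration.integral_cong refl) (simp add: sp\<sigma> cont_ulam[OF open_\<Omega> _ vcont])
    have "(\<lambda>n. \<integral>x. \<phi> x * Fint f x (v (Suc n) x) \<partial>\<sigma>) \<longlonglongrightarrow> (\<integral>x. \<phi> x * Fint f x (u_lam \<Omega> u lam x) \<partial>\<sigma>)"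
    proof (rule integral_dominated_convergence[where w="\<lambda>_. \<Phi> * K"])
      show "(\<lambda>x. \<phi> x * Fint f x (u_lam \<Omega> u lam x)) \<in> borel_measurable \<sigma>"
        using \<phi>\<sigma> Fm[OF ul_meas] by measurable
      show "(\<lambda>x. \<phi> x * Fint f x (v (Suc n) x)) \<in> borel_measurable \<sigma>" for n
        using \<phi>\<sigma> Fm[OF v\<sigma>] by measurable
      show "integrable \<sigma> (\<lambda>_. \<Phi> * K)" by simp
      show "AE x in \<sigma>. (\<lambda>n. \<phi> x * Fint f x (v (Suc n) x)) \<longlonglongrightarrow> \<phi> x * Fint f x (u_lam \<Omega> u lam x)"
        using AEconv AEf AE_space
      proof eventually_elim
        case (elim x)
        then have x: "x \<in> \<Omega>" using sp\<sigma> by simp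
        have c: "(\<lambda>n. v (Suc n) x) \<longlonglongrightarrow> u_lam \<Omega> u lam x"
          using elim(1) by (rule LIMSEQ_Suc)
        have "(\<lambda>n. Fint f x (v (Suc n) x) - Fint f x (u_lam \<Omega> u lam x)) \<longlonglongrightarrow> 0"
        proof (rule Lim_null_comparison)
          show "\<forall>\<^sub>F n in sequentially. norm (Fint f x (v (Suc n) x) - Fint f x (u_lam \<Omega> u lam x)) \<le> \<bar>v (Suc n) x - u_lam \<Omega> u lam x\<bar>"
            using Flip[OF x elim(2)] by simp
          have "(\<lambda>n. v (Suc n) x - u_lam \<Omega> u lam x) \<longlonglongrightarrow> 0" using c by (rule LIM_zero)
          then show "(\<lambda>n. \<bar>v (Suc n) x - u_lam \<Omega> u lam x\<bar>) \<longlonglongrightarrow> 0" by (rule tendsto_rabs_zero)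
        qed
        then have "(\<lambda>n. Fint f x (v (Suc n) x)) \<longlonglongrightarrow> Fint f x (u_lam \<Omega> u lam x)" by (rule LIM_zero_cancel)
        then show ?case by (intro tendsto_mult tendsto_const)
      qed
      show "AE x in \<sigma>. norm (\<phi> x * Fint f x (v (Suc n) x)) \<le> \<Phi> * K" for n
        using AEf AE_space
      proof eventually_elim
        case (elim x)
        then have x: "x \<in> \<Omega>" using sp\<sigma> by simp
        have "\<bar>Fint f x (v (Suc n) x)\<bar> \<le> K"
          using Fbd[OF x elim(1), of "v (Suc n) x"] vK[of "Suc n" x] x by simp
        then show ?case using \<Phi>[of x] K0 by (simp add: abs_mult mult_mono')
      qed
    qed
    then have "(\<lambda>n. \<integral>x. \<phi> x * Fint f x (v n x) \<partial>\<sigma>) \<longlonglongrightarrow> (\<integral>x. \<phi> x * Fint f x (u_lam \<Omega> u lam x) \<partial>\<sigma>)"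
      using filterlim_sequentially_Suc[of "\<lambda>n. \<integral>x. \<phi> x * Fint f x (v n x) \<partial>\<sigma>"] by simp
    then show ?thesis unfolding eqn .
  qed
  define G where "G = max G0 0"
  have G1: "norm (grad \<phi> x) \<le> G" for x using G0[of x] unfolding G_def by simp
  have G2: "G \<ge> 0" unfolding G_def by simp
  note G = G1 G2
  have bjoint: "(\<lambda>p. b (fst p) (snd p)) \<in> borel_measurable (lebesgue_on \<Omega> \<Otimes>\<^sub>M lborel)"
    by (rule joint_meas[OF b1_meas idL]) simp
  have gL: "grad \<phi> \<in> borel_measurable (lebesgue_on \<Omega>)" using measurable_comp[OF idL gb] by (simp add: comp_def)
  have Bm: "(\<lambda>x. Bint b x (w x) \<bullet> grad \<phi> x) \<in> borel_measurable (lebesgue_on \<Omega>)"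
    if "w \<in> borel_measurable (lebesgue_on \<Omega>)" for w
  proof -
    have "(\<lambda>x. Bint b x (w x)) \<in> borel_measurable (lebesgue_on \<Omega>)"
      unfolding Bint_def by (rule lbint_comp_meas[OF bjoint that])
    then show ?thesis using gL by measurable
  qed
  have Bint_int: "integrable (lebesgue_on \<Omega>) (\<lambda>x. Bint b x (w x) \<bullet> grad \<phi> x)"
    if wi: "integrable (lebesgue_on \<Omega>) w" for w
  proof (rule Bochner_Integration.integrable_bound[where f="\<lambda>x. M * G * \<bar>w x\<bar>"])
    show "integrable (lebesgue_on \<Omega>) (\<lambda>x. M * G * \<bar>w x\<bar>)" using wi by simp
    show "(\<lambda>x. Bint b x (w x) \<bullet> grad \<phi> x) \<in> borel_measurable (lebesgue_on \<Omega>)"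
      using wi by (intro Bm borel_measurable_integrable)
    show "AE x in lebesgue_on \<Omega>. norm (Bint b x (w x) \<bullet> grad \<phi> x) \<le> norm (M * G * \<bar>w x\<bar>)"
    proof (rule AE_I2)
      fix x assume "x \<in> space (lebesgue_on \<Omega>)"
      then have x: "x \<in> \<Omega>" by simp
      have "norm (Bint b x (w x) \<bullet> grad \<phi> x) \<le> norm (Bint b x (w x)) * norm (grad \<phi> x)"
        by (simp add: Cauchy_Schwarz_ineq2)
      also have "\<dots> \<le> (M * \<bar>w x\<bar>) * G" using Bbd[OF x] G M(2) by (intro mult_mono) auto
      finally show "norm (Bint b x (w x) \<bullet> grad \<phi> x) \<le> norm (M * G * \<bar>w x\<bar>)"
        using M(2) G(2) by (simp add: abs_mult mult_ac)
    qed
  qed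
  have uI: "integrable (lebesgue_on \<Omega>) u" using u_BV unfolding BV_def by blast
  have vI: "integrable (lebesgue_on \<Omega>) (v n)" for n using v_smooth[of n] unfolding BV_def by blast
  have L1: "(\<lambda>n. \<integral>x. \<bar>v n x - u x\<bar> \<partial>(lebesgue_on \<Omega>)) \<longlonglongrightarrow> 0" using v_strict unfolding strictly_conv_def by blast
  have leb_lim: "(\<lambda>n. \<integral>x. Bint b x (v n x) \<bullet> grad \<phi> x \<partial>(lebesgue_on \<Omega>)) \<longlonglongrightarrow> (\<integral>x. Bint b x (u x) \<bullet> grad \<phi> x \<partial>(lebesgue_on \<Omega>))"
  proof -
    have "(\<lambda>n. (\<integral>x. Bint b x (v n x) \<bullet> grad \<phi> x \<partial>(lebesgue_on \<Omega>)) - (\<integral>x. Bint b x (u x) \<bullet> grad \<phi> x \<partial>(lebesgue_on \<Omega>))) \<longlonglongrightarrow> 0"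
    proof (rule Lim_null_comparison)
      show "\<forall>\<^sub>F n in sequentially. norm ((\<integral>x. Bint b x (v n x) \<bullet> grad \<phi> x \<partial>(lebesgue_on \<Omega>)) - (\<integral>x. Bint b x (u x) \<bullet> grad \<phi> x \<partial>(lebesgue_on \<Omega>)))
          \<le> M * G * (\<integral>x. \<bar>v n x - u x\<bar> \<partial>(lebesgue_on \<Omega>))"
      proof (rule always_eventually, rule allI)
        fix n
        define Dn where "Dn = (\<lambda>x. Bint b x (v n x) \<bullet> grad \<phi> x - Bint b x (u x) \<bullet> grad \<phi> x)"
        have eqd: "(\<integral>x. Bint b x (v n x) \<bullet> grad \<phi> x \<partial>(lebesgue_on \<Omega>)) - (\<integral>x. Bint b x (u x) \<bullet> grad \<phi> x \<partial>(lebesgue_on \<Omega>))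
            = (\<integral>x. Dn x \<partial>(lebesgue_on \<Omega>))"
          unfolding Dn_def by (rule Bochner_Integration.integral_diff[OF Bint_int[OF vI] Bint_int[OF uI], symmetric])
        have n1: "norm (\<integral>x. Dn x \<partial>(lebesgue_on \<Omega>)) \<le> (\<integral>x. norm (Dn x) \<partial>(lebesgue_on \<Omega>))"
          by (rule integral_norm_bound)
        have n2: "(\<integral>x. norm (Dn x) \<partial>(lebesgue_on \<Omega>)) \<le> (\<integral>x. M * G * \<bar>v n x - u x\<bar> \<partial>(lebesgue_on \<Omega>))"
        proof (rule integral_mono)
          show "integrable (lebesgue_on \<Omega>) (\<lambda>x. norm (Dn x))"
            unfolding Dn_def by (intro integrable_norm Bochner_Integration.integrable_diff Bint_int vI uI)
          show "integrable (lebesgue_on \<Omega>) (\<lambda>x. M * G * \<bar>v n x - u x\<bar>)"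
            by (intro integrable_mult_right integrable_abs Bochner_Integration.integrable_diff vI uI)
          fix x assume "x \<in> space (lebesgue_on \<Omega>)"
          then have x: "x \<in> \<Omega>" by simp
          have d1: "Dn x = (Bint b x (v n x) - Bint b x (u x)) \<bullet> grad \<phi> x" unfolding Dn_def by (simp add: inner_diff_left)
          have d2: "norm ((Bint b x (v n x) - Bint b x (u x)) \<bullet> grad \<phi> x) \<le> norm (Bint b x (v n x) - Bint b x (u x)) * norm (grad \<phi> x)"
            by (simp add: Cauchy_Schwarz_ineq2)
          have d3: "norm (Bint b x (v n x) - Bint b x (u x)) * norm (grad \<phi> x) \<le> (M * \<bar>v n x - u x\<bar>) * G"
            using Blip[OF x] G M(2) by (intro mult_mono) auto
          show "norm (Dn x) \<le> M * G * \<bar>v n x - u x\<bar>"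
            using d1 d2 d3 by (simp add: mult_ac)
        qed
        have n3: "(\<integral>x. M * G * \<bar>v n x - u x\<bar> \<partial>(lebesgue_on \<Omega>)) = M * G * (\<integral>x. \<bar>v n x - u x\<bar> \<partial>(lebesgue_on \<Omega>))"
          by (rule integral_mult_right_zero)
        show "norm ((\<integral>x. Bint b x (v n x) \<bullet> grad \<phi> x \<partial>(lebesgue_on \<Omega>)) - (\<integral>x. Bint b x (u x) \<bullet> grad \<phi> x \<partial>(lebesgue_on \<Omega>)))
          \<le> M * G * (\<integral>x. \<bar>v n x - u x\<bar> \<partial>(lebesgue_on \<Omega>))"
          unfolding eqd using n1 n2 n3 by linarith
      qed
      show "(\<lambda>n. M * G * (\<integral>x. \<bar>v n x - u x\<bar> \<partial>(lebesgue_on \<Omega>))) \<longlonglongrightarrow> 0"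
        using tendsto_mult_right_zero[OF L1] by simp
    qed
    then show ?thesis by (rule LIM_zero_cancel)
  qed
  show ?thesis
    unfolding pairing_int_def by (intro tendsto_diff tendsto_minus sig_lim leb_lim)
qed

end
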